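(* Let $\sqrt{2} = (1.b_1 b_2 b_3 \cdots)_2$ be the binary expansion of $\sqrt 2$. For integers $n \geq 2$, let $L_n(x) = \left\lfloor \frac{x(2^n - x)}{2^{n-2}} \right\rfloor$ for $x \in X_n = \{1, 2, \dots, 2^n - 1\}$, call $n$ undesirable if there exists $x \in X_n$ with $L_n(x) = 2^{n-1}$, and let $d_N$ be the number of undesirable $n$ with $2 \le n \leq N$. If $\sqrt 2$ is simply normal to base $2$, i.e. $\lim_{n \to \infty} \frac{1}{n}\#\{1 \le i \le n : b_i = 0\} = 1/2$, then $\liminf_{N \to \infty} d_N / N \geq 1/6$. *)

theory Defs
  imports "HOL-Analysis.Analysis"
begin

text \<open>i-th binary digit of sqrt 2 after the binary point (i \<ge> 1): sqrt 2 = (1.b_1 b_2 ...)_2.\<close>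
definition sqrt2_bit :: "nat \<Rightarrow> int" where
  "sqrt2_bit i = \<lfloor>sqrt 2 * 2 ^ i\<rfloor> mod 2"

definition L :: "nat \<Rightarrow> nat \<Rightarrow> int" where
  "L n x = \<lfloor>real x * (2 ^ n - real x) / 2 ^ (n - 2)\<rfloor>"

definition X :: "nat \<Rightarrow> nat set" where
  "X n = {1..2 ^ n - 1}"

definition undesirable :: "nat \<Rightarrow> bool" where
  "undesirable n \<longleftrightarrow> (\<exists>x \<in> X n. L n x = 2 ^ (n - 1))"

definition d :: "nat \<Rightarrow> nat" where
  "d N = card {n. 2 \<le> n \<and> n \<le> N \<and> undesirable n}"

definition sqrt2_simply_normal :: bool where
  "sqrt2_simply_normal \<longleftrightarrow>
     (\<lambda>n. real (card {i. 1 \<le> i \<and> i \<le> n \<and> sqrt2_bit i = 0}) / real n) \<longlonglongrightarrow> 1 / 2"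

end

theory Submission imports Defs begin

definition F :: "nat \<Rightarrow> int" where "F i = \<lfloor>sqrt 2 * 2 ^ i\<rfloor>"

lemma bit01: "sqrt2_bit i = 0 \<or> sqrt2_bit i = 1"
  unfolding sqrt2_bit_def by auto

lemma F_Suc: "F (Suc i) = 2 * F i + sqrt2_bit (Suc i)"
proof -
  define y where "y = sqrt 2 * 2 ^ i"
  have e: "sqrt 2 * 2 ^ Suc i = 2 * y" by (simp add: y_def)
  have a: "2 * \<lfloor>y\<rfloor> \<le> \<lfloor>2*y\<rfloor>"
    by (metis floor_less_cancel le_floor_iff linorder_not_less mult_2 of_int_add of_int_floor_le add_mono)
  have b: "\<lfloor>2*y\<rfloor> \<le> 2 * \<lfloor>y\<rfloor> + 1"
  proof -
    have "2*y < 2 * \<lfloor>y\<rfloor> + 2" using real_of_int_floor_add_one_gt[of y] by linarith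
    thus ?thesis by linarith
  qed
  have "F (Suc i) = \<lfloor>2*y\<rfloor>" "F i = \<lfloor>y\<rfloor>" using e by (auto simp: F_def y_def mult.left_commute)
  moreover have "sqrt2_bit (Suc i) = \<lfloor>2*y\<rfloor> mod 2" unfolding sqrt2_bit_def e by simp
  moreover have "\<lfloor>2*y\<rfloor> mod 2 = \<lfloor>2*y\<rfloor> - 2 * \<lfloor>y\<rfloor>"
  proof -
    have "\<lfloor>2*y\<rfloor> = 2 * \<lfloor>y\<rfloor> \<or> \<lfloor>2*y\<rfloor> = 2 * \<lfloor>y\<rfloor> + 1" using a b by linarith
    thus ?thesis by auto
  qed
  ultimately show ?thesis by simp
qed

lemma F5: "F (m+5) = 32 * F m + 16 * sqrt2_bit (m+1) + 8 * sqrt2_bit (m+2) + 4 * sqrt2_bit (m+3)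
   + 2 * sqrt2_bit (m+4) + sqrt2_bit (m+5)"
proof -
  have "F (Suc(Suc(Suc(Suc(Suc m))))) = 32 * F m + 16 * sqrt2_bit (Suc m) + 8 * sqrt2_bit (Suc (Suc m)) + 4 * sqrt2_bit (Suc (Suc (Suc m)))
   + 2 * sqrt2_bit (Suc (Suc (Suc (Suc m)))) + sqrt2_bit (Suc (Suc (Suc (Suc (Suc m)))))"
    by (simp add: F_Suc algebra_simps)
  thus ?thesis by (simp add: numeral_eq_Suc)
qed

lemma key:
  fixes P u s :: real
  assumes "P>0" "s = sqrt 2 * P" "0 \<le> u" "u \<le> s" "s - u < 11/32"
  shows "2*P \<le> (2*P-u)*(2*P+u)/P" "(2*P-u)*(2*P+u)/P < 2*P+1"
proof -
  have s2: "s^2 = 2*P^2" using assms(2) by (simp add: power_mult_distrib)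
  have "u^2 \<le> s^2" using assms by (intro power_mono) auto
  hence "2*P*P \<le> (2*P-u)*(2*P+u)" using s2 by (simp add: algebra_simps power2_eq_square)
  thus "2*P \<le> (2*P-u)*(2*P+u)/P" using assms(1) by (simp add: field_simps)
  have sq: "sqrt 2 < 16/11"
  proof -
    have "sqrt 2 < sqrt ((16/11)^2)" by (intro real_sqrt_less_mono) (simp add: power2_eq_square)
    thus ?thesis by simp
  qed
  have "s^2 - u^2 = (s-u)*(s+u)" by (simp add: algebra_simps power2_eq_square)
  also have "\<dots> \<le> 11 / 32 * (2 * s)" 
    by (intro mult_mono) (use assms in linarith)+
  also have "\<dots> < P" using sq assms(1,2) by simp
  finally have "(2*P-u)*(2*P+u) < 2*P*P + P" using s2 by (simp add: algebra_simps power2_eq_square)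
  thus "(2*P-u)*(2*P+u)/P < 2*P+1" using assms(1) by (simp add: field_simps)
qed

definition gd :: "int \<Rightarrow> int \<Rightarrow> int \<Rightarrow> int \<Rightarrow> int \<Rightarrow> bool" where
  "gd a b c e f \<longleftrightarrow> (a=0 \<and> b=0) \<or> (a=0 \<and> b=1 \<and> c=0 \<and> e=0) \<or> (a=0 \<and> b=1 \<and> c=0 \<and> e=1 \<and> f=0)"

definition goodp :: "nat \<Rightarrow> bool" where
  "goodp i \<longleftrightarrow> gd (sqrt2_bit i) (sqrt2_bit (i+1)) (sqrt2_bit (i+2)) (sqrt2_bit (i+3)) (sqrt2_bit (i+4))"

lemma gd_val:
  assumes "a \<in> {0,1}" "b \<in> {0,1}" "c \<in> {0,1}" "e \<in> {0,1}" "f \<in> {0,1}" "gd a b c e f"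
  shows "16*a + 8*b + 4*c + 2*e + f \<le> 10"
  using assms(6) unfolding gd_def
  apply (elim disjE conjE)
  using assms(1-5) by auto

lemma bitin: "sqrt2_bit i \<in> {0,1}" using bit01[of i] by auto

lemma good_undes:
  assumes "goodp (m+1)"
  shows "undesirable (m+2)"
proof -
  have e: "m+1+1 = m+2" "m+1+2 = m+3" "m+1+3=m+4" "m+1+4=m+5" by simp_all
  have g: "gd (sqrt2_bit (m+1)) (sqrt2_bit (m+2)) (sqrt2_bit (m+3)) (sqrt2_bit (m+4)) (sqrt2_bit (m+5))"
    using assms unfolding goodp_def e .
  have v: "16 * sqrt2_bit (m+1) + 8 * sqrt2_bit (m+2) + 4 * sqrt2_bit (m+3)
   + 2 * sqrt2_bit (m+4) + sqrt2_bit (m+5) \<le> 10"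
    by (rule gd_val[OF bitin bitin bitin bitin bitin g])
  have "F (m+5) \<le> 32 * F m + 10"
    unfolding F5 using v by linarith
  moreover have "sqrt 2 * 2 ^ (m+5) < F (m+5) + 1"
    using real_of_int_floor_add_one_gt[of "sqrt 2 * 2^(m+5)"] unfolding F_def by simp
  ultimately have "sqrt 2 * 2 ^ (m+5) < 32 * F m + 11" by linarith
  hence lt: "sqrt 2 * 2 ^ m - F m < 11/32" by (simp add: power_add)
  define P :: real where "P = 2 ^ m"
  define s where "s = sqrt 2 * P"
  define u where "u = F m"
  have P0: "P > 0" by (simp add: P_def)
  have u0: "0 \<le> u" unfolding u_def F_def by simp
  have us: "real_of_int u \<le> s" unfolding u_def F_def s_def P_def by simp
  have su: "s - u < 11/32" using lt by (simp add: s_def P_def u_def)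
  have sq2: "sqrt 2 < 2"
  proof -
    have "sqrt 2 < sqrt (2^2)" by (intro real_sqrt_less_mono) simp
    thus ?thesis by simp
  qed
  have "s < 2 * P" using sq2 P0 by (simp add: s_def)
  hence uP: "real_of_int u < 2 * P" using us by linarith
  have k1: "2*P \<le> (2*P-u)*(2*P+u)/P" and k2: "(2*P-u)*(2*P+u)/P < 2*P+1"
    using key[OF P0 s_def _ us su] u0 by auto
  define x where "x = nat (2^(m+1) - u)"
  have uP': "u < 2^(m+1)"
  proof -
    have "real_of_int u < real_of_int (2^(m+1))" using uP by (simp add: P_def)
    thus ?thesis by linarith
  qed
  have xr: "real x = 2*P - u" unfolding x_def P_def using uP' by simp
  have x1: "1 \<le> x" using uP' unfolding x_def by simp
  have x2: "x \<le> 2^(m+2) - 1"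
  proof -
    have "int x \<le> 2^(m+1)" unfolding x_def using u0 uP' by simp
    moreover have "(2::int)^(m+1) < 2^(m+2)" by simp
    ultimately have "int x < 2^(m+2)" by linarith
    hence "int x < int (2^(m+2))" by simp
    hence "x < 2^(m+2)" by (simp only: of_nat_less_iff)
    thus ?thesis by simp
  qed
  have h4: "(2::real)^(m+2) = 4*P" by (simp add: P_def power_add)
  have hm: "m+2-2 = m" by simp
  have h5: "4*P-(2*P-u) = 2*P+u" by simp
  have "real x * (2 ^ (m+2) - real x) / 2 ^ (m+2-2) = (2*P-u)*(2*P+u)/P"
    unfolding xr h4 hm P_def[symmetric] h5 ..
  moreover have h6: "real_of_int (2^(m+1)) = 2*P" by (simp add: P_def)
  ultimately have "L (m+2) x = 2^(m+1)"
    unfolding L_def using k1 k2 by (intro floor_unique) (simp_all only: h6)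
  moreover have "x \<in> X (m+2)" using x1 x2 unfolding X_def by simp
  ultimately show ?thesis unfolding undesirable_def by (intro bexI[of _ x]) auto
qed


definition psi :: "int \<Rightarrow> int \<Rightarrow> int \<Rightarrow> int \<Rightarrow> int" where
  "psi a b c e = (if a=0 then (if b=1 \<and> c=1 then -2 else 0) else if b=1 then -8 else if c=1 \<and> e=1 then -6 else -4)"

lemma pot:
  assumes "a=0 \<or> a=1" "b=0 \<or> b=1" "c=0 \<or> c=1" "e=0 \<or> e=1" "f=0 \<or> f=1"
  shows "10*(if a=0 then 1 else 0) - 4 + psi b c e f - psi a b c e \<le> 6*(if gd a b c e f then 1 else (0::int))"
  using assms by (elim disjE; simp add: gd_def psi_def)

lemma psi_bnd: "-8 \<le> psi a b c e \<and> psi a b c e \<le> 0"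
  unfolding psi_def by auto

definition Psi :: "nat \<Rightarrow> int" where
  "Psi j = psi (sqrt2_bit j) (sqrt2_bit (j+1)) (sqrt2_bit (j+2)) (sqrt2_bit (j+3))"

definition G :: "nat \<Rightarrow> nat" where "G M = card {i. 1 \<le> i \<and> i \<le> M \<and> goodp i}"
definition Zc :: "nat \<Rightarrow> nat" where "Zc M = card {i. 1 \<le> i \<and> i \<le> M \<and> sqrt2_bit i = 0}"

lemma card_step:
  "card {i. 1 \<le> i \<and> i \<le> Suc M \<and> P i} = card {i. 1 \<le> i \<and> i \<le> M \<and> P i} + (if P (Suc M) then 1 else 0)"
proof -
  have e: "{i. 1 \<le> i \<and> i \<le> Suc M \<and> P i} = {i. 1 \<le> i \<and> i \<le> M \<and> P i} \<union> {i. i = Suc M \<and> P i}"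
    by (auto simp: le_Suc_eq)
  have f1: "finite {i. 1 \<le> i \<and> i \<le> M \<and> P i}" by (rule finite_subset[of _ "{..M}"]) auto
  have f2: "finite {i. i = Suc M \<and> P i}" by simp
  have "{i. i = Suc M \<and> P i} = (if P (Suc M) then {Suc M} else {})" by auto
  hence "card {i. i = Suc M \<and> P i} = (if P (Suc M) then 1 else 0)" by simp
  moreover have "card ({i. 1 \<le> i \<and> i \<le> M \<and> P i} \<union> {i. i = Suc M \<and> P i}) =
     card {i. 1 \<le> i \<and> i \<le> M \<and> P i} + card {i. i = Suc M \<and> P i}"
    by (rule card_Un_disjoint[OF f1 f2]) auto
  ultimately show ?thesis unfolding e by simp
qed

lemma bit01': "sqrt2_bit i = 0 \<or> sqrt2_bit i = 1" by (rule bit01)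

lemma main_ineq: "10*int(Zc M) - 4*int M + Psi (M+1) - Psi 1 \<le> 6*int(G M)"
proof (induction M)
  case 0
  have "Zc 0 = 0" "G 0 = 0" unfolding Zc_def G_def by auto
  thus ?case by simp
next
  case (Suc M)
  have p: "10*(if sqrt2_bit (Suc M)=0 then 1 else 0) - 4 + Psi (Suc M + 1) - Psi (Suc M)
     \<le> 6*(if goodp (Suc M) then 1 else (0::int))"
  proof -
    have e: "Suc M+1+1 = Suc M+2" "Suc M+1+2 = Suc M+3" "Suc M+1+3 = Suc M+4" by simp_all
    show ?thesis unfolding Psi_def goodp_def e
      by (rule pot[OF bit01' bit01' bit01' bit01' bit01'])
  qed
  have "Zc (Suc M) = Zc M + (if sqrt2_bit (Suc M) = 0 then 1 else 0)"
    unfolding Zc_def by (rule card_step)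
  moreover have "G (Suc M) = G M + (if goodp (Suc M) then 1 else 0)"
    unfolding G_def by (rule card_step)
  ultimately show ?case using Suc.IH p by (auto split: if_splits)
qed

lemma d_ge: "1 \<le> N \<Longrightarrow> G (N-1) \<le> d N"
proof -
  assume N: "1 \<le> N"
  define A where "A = {i. 1 \<le> i \<and> i \<le> N-1 \<and> goodp i}"
  have sub: "Suc ` A \<subseteq> {n. 2 \<le> n \<and> n \<le> N \<and> undesirable n}"
  proof
    fix n assume "n \<in> Suc ` A"
    then obtain i where i: "n = Suc i" "1 \<le> i" "i \<le> N-1" "goodp i" unfolding A_def by auto
    have "goodp ((i-1)+1)" using i by simp
    hence "undesirable ((i-1)+2)" by (rule good_undes)
    moreover have "(i-1)+2 = n" using i by simp
    ultimately show "n \<in> {n. 2 \<le> n \<and> n \<le> N \<and> undesirable n}" using i N by auto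
  qed
  have fin: "finite {n. 2 \<le> n \<and> n \<le> N \<and> undesirable n}" by (rule finite_subset[of _ "{..N}"]) auto
  have "G (N-1) = card (Suc ` A)" unfolding G_def A_def by (simp add: card_image)
  also have "\<dots> \<le> d N" unfolding d_def by (rule card_mono[OF fin sub])
  finally show ?thesis .
qed

lemma gfrac: "\<And>z a::real. a > 0 \<Longrightarrow> (10*(z/a)*(a/(1+a)) - 4*(a/(1+a)) - 8*inverse(1+a))/6 = (10*z - 4*a - 8)/(6*(1+a))"
proof -
  fix z a :: real assume a: "a > 0"
  have n: "a \<noteq> 0" "1 + a \<noteq> 0" using a by auto
  have 1: "(z/a)*(a/(1+a)) = z/(1+a)" using n by simp
  have 2: "inverse (1+a) = 1/(1+a)" by (simp add: inverse_eq_divide)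
  have 3: "(10*z - 4*a - 8)/(1+a) = 10*(z/(1+a)) - 4*(a/(1+a)) - 8*(1/(1+a))"
    by (simp add: diff_divide_distrib)
  show "(10*(z/a)*(a/(1+a)) - 4*(a/(1+a)) - 8*inverse(1+a))/6 = (10*z - 4*a - 8)/(6*(1+a))"
  proof -
    have "(10*(z/a)*(a/(1+a)) - 4*(a/(1+a)) - 8*inverse(1+a))/6 = ((10*z - 4*a - 8)/(1+a))/6"
      unfolding mult.assoc 1 2 3 by simp
    also have "\<dots> = (10*z - 4*a - 8)/(6*(1+a))" by (simp add: mult.commute)
    finally show ?thesis .
  qed
qed

theorem corollary3p4:
  assumes "sqrt2_simply_normal"
  shows "Liminf sequentially (\<lambda>N. ereal (real (d N) / real N)) \<ge> ereal (1 / 6)"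
proof -
  define h :: "nat \<Rightarrow> real" where "h N = (10 * real (Zc (N-1)) - 4 * real (N-1) - 8) / (6 * real N)" for N
  have r: "(\<lambda>M. real (Zc M) / real M) \<longlonglongrightarrow> 1/2"
    using assms unfolding sqrt2_simply_normal_def Zc_def .
  have hb: "h N \<le> real (d N) / real N" if N: "1 \<le> N" for N
  proof -
    have m: "10*int(Zc (N-1)) - 4*int (N-1) + Psi (N-1+1) - Psi 1 \<le> 6*int(G (N-1))" by (rule main_ineq)
    have "-8 \<le> Psi (N-1+1) - Psi 1" using psi_bnd unfolding Psi_def
      by (smt (verit))
    hence "10*int(Zc (N-1)) - 4*int (N-1) - 8 \<le> 6*int(G (N-1))" using m by linarith
    hence "10*real(Zc (N-1)) - 4*real (N-1) - 8 \<le> 6*real(G (N-1))"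
      by (metis (mono_tags, opaque_lifting) of_int_le_iff of_int_of_nat_eq of_int_diff of_int_mult of_int_numeral)
    also have "\<dots> \<le> 6 * real (d N)" using d_ge[OF N] by simp
    finally have "10*real(Zc (N-1)) - 4*real (N-1) - 8 \<le> 6 * real (d N)" .
    thus ?thesis unfolding h_def using N by (simp add: divide_simps)
  qed
  have hS: "(\<lambda>M. h (Suc M)) \<longlonglongrightarrow> 1/6"
  proof -
    have t: "(\<lambda>M. (10 * (real (Zc M) / real M) * (real M / real (Suc M)) - 4 * (real M / real (Suc M))
               - 8 * inverse (real (Suc M))) / 6) \<longlonglongrightarrow> (10 * (1/2) * 1 - 4 * 1 - 8 * 0) / 6"
      by (intro tendsto_intros r LIMSEQ_n_over_Suc_n LIMSEQ_inverse_real_of_nat) simp_all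
    have ev: "\<forall>\<^sub>F M in sequentially. (10 * (real (Zc M) / real M) * (real M / real (Suc M)) - 4 * (real M / real (Suc M))
               - 8 * inverse (real (Suc M))) / 6 = h (Suc M)"
    proof (rule eventually_sequentiallyI[of 1])
      fix M :: nat assume "1 \<le> M"
      thus "(10 * (real (Zc M) / real M) * (real M / real (Suc M)) - 4 * (real M / real (Suc M))
               - 8 * inverse (real (Suc M))) / 6 = h (Suc M)"
      proof -
        have a: "real M > 0" using \<open>1 \<le> M\<close> by simp
        have eq1: "h (Suc M) = (10*real(Zc M) - 4*real M - 8)/(6*(1+real M))" unfolding h_def by simp
        show ?thesis unfolding eq1 of_nat_Suc by (rule gfrac[OF a])
      qed
    qed
    show ?thesis using Lim_transform_eventually[OF t ev] by simp
  qed
  hence "h \<longlonglongrightarrow> 1/6" by (rule filterlim_sequentially_Suc[THEN iffD1])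
  hence "(\<lambda>N. ereal (h N)) \<longlonglongrightarrow> ereal (1/6)" by (rule tendsto_ereal)
  hence "Liminf sequentially (\<lambda>N. ereal (h N)) = ereal (1/6)"
    by (intro lim_imp_Liminf) simp_all
  moreover have "Liminf sequentially (\<lambda>N. ereal (h N)) \<le> Liminf sequentially (\<lambda>N. ereal (real (d N) / real N))"
    by (intro Liminf_mono eventually_sequentiallyI[of 1]) (use hb in simp)
  ultimately show ?thesis by simp
qed

end
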